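(* There is an absolute constant $C > 0$ such that for every $L \geq 1$, $m \geq 1$, $k^* \in [m]$ and every ordered pair $(\tau, \tilde\tau)$ of states in $[m]^{L+1}$, the number of triples $(\lambda, i, k) \in [m]^{L+1}\times\{0,\ldots,L\}\times[m]$ such that $(\tau,\tilde\tau)$ occurs as a pair of consecutive states of the path $\gamma_{\lambda,\lambda_{[i,k]}}$ is at most $C m^2 (L+1)^{1 + \log_2 3}$.
   Context: States are $\lambda = (\lambda_0,\ldots,\lambda_L) \in [m]^{L+1}$; coordinate $\ell$ is level $\ell$. $\lambda_{[i,k]}$ is $\lambda$ with the level-$i$ entry replaced by $k$. The procedure $\mathbf{Swap}(a,b)$ ($0\le a\le b\le L$): if $b - a \leq 1$, perform the single elementary operation exchanging the entries at levels $a$ and $b$; otherwise with $h = \lfloor (a+b)/2 \rfloor$ perform $\mathbf{Swap}(a,h)$, then $\mathbf{Swap}(h,b)$, then $\mathbf{Swap}(a,h)$. The path $\gamma_{\lambda,\lambda_{[i,k]}}$ (with $k^*$ a fixed element of $[m]$) starts at $\lambda$ and performs in order: (1) set the level-0 entry to $k^*$; (2) $\mathbf{Swap}(0,i)$; (3) set the level-0 entry to $k$; (4) $\mathbf{Swap}(0,i)$; (5) set the level-0 entry to $\lambda_0$. The path is the sequence of states consisting of $\lambda$ followed by the state after each elementary operation; a pair of consecutive states is (state before, state after) one elementary operation. *)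

theory Defs
  imports Complex_Main
begin

text \<open>States in [m]^(L+1) are lists of length L+1 with entries in {1..m};
  list index l is level l.\<close>

definition states :: "nat \<Rightarrow> nat \<Rightarrow> nat list set" where
  "states L m = {xs. length xs = Suc L \<and> set xs \<subseteq> {1..m}}"

datatype elop = SetZero nat | Exch nat nat

fun apply_op :: "elop \<Rightarrow> nat list \<Rightarrow> nat list" where
  "apply_op (SetZero v) xs = xs[0 := v]"
| "apply_op (Exch a b) xs = xs[a := xs ! b, b := xs ! a]"

function swap_ops :: "nat \<Rightarrow> nat \<Rightarrow> elop list" where
  "swap_ops a b =
     (if b - a \<le> 1 then [Exch a b]
      else (let h = (a + b) div 2 in swap_ops a h @ swap_ops h b @ swap_ops a h))"
  by pat_completeness auto
termination by (relation "measure (\<lambda>(a, b). b - a)") auto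

definition path_ops :: "nat \<Rightarrow> nat list \<Rightarrow> nat \<Rightarrow> nat \<Rightarrow> elop list" where
  "path_ops kstar lam i k =
     [SetZero kstar] @ swap_ops 0 i @ [SetZero k] @ swap_ops 0 i @ [SetZero (lam ! 0)]"

fun run_ops :: "elop list \<Rightarrow> nat list \<Rightarrow> nat list list" where
  "run_ops [] xs = [xs]"
| "run_ops (o1 # os) xs = xs # run_ops os (apply_op o1 xs)"

definition gamma_path :: "nat \<Rightarrow> nat list \<Rightarrow> nat \<Rightarrow> nat \<Rightarrow> nat list list" where
  "gamma_path kstar lam i k = run_ops (path_ops kstar lam i k) lam"

definition consec_pairs :: "'a list \<Rightarrow> ('a \<times> 'a) set" where
  "consec_pairs p = set (zip p (tl p))"

end

theory Submission
  imports Defs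
begin

lemma length_apply_op[simp]: "length (apply_op op xs) = length xs"
  by (cases op) auto

lemma length_exec[simp]: "length (fold apply_op ops xs) = length xs"
  by (induction ops arbitrary: xs) auto

declare swap_ops.simps[simp del]

lemma swap_ops_exch:
  "op \<in> set (swap_ops a b) \<Longrightarrow> \<exists>x y. op = Exch x y \<and> x \<le> max a b \<and> y \<le> max a b"
proof (induction "b - a" arbitrary: a b rule: less_induct)
  case less
  show ?case
  proof (cases "b - a \<le> 1")
    case True
    have "op \<in> set [Exch a b]" using less.prems True by (simp add: swap_ops.simps[of a b])
    then show ?thesis by auto
  next
    case False
    define h where "h = (a+b) div 2"
    have h1: "h - a < b - a" "b - h < b - a" "a \<le> h" "h \<le> b" using False unfolding h_def by auto
    from less.prems False have "op \<in> set (swap_ops a h) \<or> op \<in> set (swap_ops h b)"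
      unfolding h_def by (subst (asm) swap_ops.simps) (auto simp: Let_def)
    then show ?thesis
    proof
      assume "op \<in> set (swap_ops a h)"
      from less.hyps[OF h1(1) this] obtain x y where "op = Exch x y" "x \<le> max a h" "y \<le> max a h" by blast
      then show ?thesis using h1 by auto
    next
      assume "op \<in> set (swap_ops h b)"
      from less.hyps[OF h1(2) this] obtain x y where "op = Exch x y" "x \<le> max h b" "y \<le> max h b" by blast
      then show ?thesis using h1 by auto
    qed
  qed
qed

definition exch_ok :: "nat \<Rightarrow> elop list \<Rightarrow> bool" where
  "exch_ok n ops = (\<forall>op\<in>set ops. \<exists>x y. op = Exch x y \<and> x < n \<and> y < n)"

lemma swap_ok: "b < n \<Longrightarrow> a \<le> b \<Longrightarrow> exch_ok n (swap_ops a b)"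
  unfolding exch_ok_def using swap_ops_exch by fastforce

lemma ok_take: "exch_ok n ops \<Longrightarrow> exch_ok n (take t ops)"
  unfolding exch_ok_def by (meson in_set_takeD)

lemma exch_invol: "x < length xs \<Longrightarrow> y < length xs \<Longrightarrow>
   apply_op (Exch x y) (apply_op (Exch x y) xs) = xs"
  by (auto intro!: nth_equalityI simp: nth_list_update)

lemma exec_inj: "exch_ok (length xs) ops \<Longrightarrow> length ys = length xs \<Longrightarrow>
   fold apply_op ops xs = fold apply_op ops ys \<Longrightarrow> xs = ys"
proof (induction ops arbitrary: xs ys)
  case Nil
  have "fold apply_op [] xs = fold apply_op [] ys" by (rule Nil.prems(3))
  then show ?case by (simp only: fold_Nil id_apply)
next
  case (Cons op ops)
  from Cons.prems(1) obtain x y where op: "op = Exch x y" "x < length xs" "y < length xs"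
    unfolding exch_ok_def by auto
  have ok: "exch_ok (length (apply_op op xs)) ops" using Cons.prems(1) by (simp add: exch_ok_def)
  have "fold apply_op ops (apply_op op xs) = fold apply_op ops (apply_op op ys)"
    using Cons.prems(3) by simp
  moreover have "length (apply_op op ys) = length (apply_op op xs)" using Cons.prems(2) by simp
  ultimately have e: "apply_op op xs = apply_op op ys"
    using Cons.IH[OF ok] by blast
  have i1: "apply_op op (apply_op op xs) = xs" unfolding op(1) by (rule exch_invol[OF op(2,3)])
  have i2: "apply_op op (apply_op op ys) = ys" unfolding op(1)
    by (rule exch_invol) (use op Cons.prems(2) in auto)
  show ?case using i1 i2 e by metis
qed

lemma exec_set: "exch_ok (length xs) ops \<Longrightarrow> set xs \<subseteq> A \<Longrightarrow> set (fold apply_op ops xs) \<subseteq> A"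
proof (induction ops arbitrary: xs)
  case Nil
  have "fold apply_op [] xs = xs" by simp
  then show ?case using Nil.prems(2) by (simp only:)
next
  case (Cons op ops)
  from Cons.prems(1) obtain x y where op: "op = Exch x y" "x < length xs" "y < length xs"
    unfolding exch_ok_def by auto
  have xA: "xs!x \<in> A" "xs!y \<in> A" using op(2,3) Cons.prems(2) by (meson nth_mem subsetD)+
  have "set (apply_op op xs) \<subseteq> insert (xs!x) (set (xs[x:=xs!y]))"
    unfolding op apply_op.simps by (rule set_update_subset_insert)
  also have "set (xs[x:=xs!y]) \<subseteq> insert (xs!y) (set xs)"
    by (rule set_update_subset_insert)
  finally have s1: "set (apply_op op xs) \<subseteq> insert (xs!x) (insert (xs!y) (set xs))" by blast
  have s2: "set (apply_op op xs) \<subseteq> A" using s1 xA Cons.prems(2) by blast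
  have ok: "exch_ok (length (apply_op op xs)) ops" using Cons.prems(1) by (simp add: exch_ok_def)
  have "set (fold apply_op ops (apply_op op xs)) \<subseteq> A" by (rule Cons.IH[OF ok s2])
  then show ?case by simp
qed

lemma ar1: "(b::nat) - a \<le> 2*P \<Longrightarrow> (a+b) div 2 - a \<le> P"
proof -
  assume h: "b - a \<le> 2*P"
  have "2 * ((a+b) div 2) \<le> a + b" "a + b \<le> 2*((a+b) div 2) + 1" by auto
  then show ?thesis using h by linarith
qed
lemma ar2: "(b::nat) - a \<le> 2*P \<Longrightarrow> b - (a+b) div 2 \<le> P"
proof -
  assume h: "b - a \<le> 2*P"
  have "2 * ((a+b) div 2) \<le> a + b" "a + b \<le> 2*((a+b) div 2) + 1" by auto
  then show ?thesis using h by linarith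
qed

lemma swap_len: "b - a \<le> 2^k \<Longrightarrow> length (swap_ops a b) \<le> 3^k"
proof (induction k arbitrary: a b)
  case 0
  then have "swap_ops a b = [Exch a b]" by (simp add: swap_ops.simps[of a b])
  then show ?case by simp
next
  case (Suc k)
  show ?case
  proof (cases "b - a \<le> 1")
    case True
    then have "swap_ops a b = [Exch a b]" by (simp add: swap_ops.simps[of a b])
    then show ?thesis by simp
  next
    case False
    define h where "h = (a+b) div 2"
    have "swap_ops a b = swap_ops a h @ swap_ops h b @ swap_ops a h"
      using False unfolding h_def by (simp add: swap_ops.simps[of a b] Let_def)
    then have e: "length (swap_ops a b) = 2 * length (swap_ops a h) + length (swap_ops h b)"
      by simp
    have d: "b - a \<le> 2 * 2^k" using Suc.prems by simp
    have "length (swap_ops a h) \<le> 3^k" using ar1[OF d] unfolding h_def by (rule Suc.IH)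
    moreover have "length (swap_ops h b) \<le> 3^k" using ar2[OF d] unfolding h_def by (rule Suc.IH)
    ultimately show ?thesis using e by simp
  qed
qed

lemma run_ops_length[simp]: "length (run_ops ops xs) = Suc (length ops)"
  by (induction ops arbitrary: xs) auto

lemma run_ops_nth: "j \<le> length ops \<Longrightarrow> run_ops ops xs ! j = fold apply_op (take j ops) xs"
proof (induction ops arbitrary: xs j)
  case Nil
  then show ?case by simp
next
  case (Cons a ops)
  then show ?case by (cases j) auto
qed

lemma take_ops1: "j' \<le> length sw \<Longrightarrow> take j' (sw @ r) = take j' sw" by simp
lemma take_ops2: "t \<le> length sw \<Longrightarrow> take (length sw + Suc t) (sw @ x # sw @ r) = sw @ x # take t sw"
  by simp

lemma gamma_nth:
  assumes "j \<le> 2 * length (swap_ops 0 i) + 2"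
  shows "gamma_path kstar l i k ! j =
    (if j = 0 then l else if j \<le> length (swap_ops 0 i) + 1
     then fold apply_op (take (j-1) (swap_ops 0 i)) (l[0:=kstar])
     else fold apply_op (take (j - length (swap_ops 0 i) - 2) (swap_ops 0 i))
            ((fold apply_op (swap_ops 0 i) (l[0:=kstar]))[0:=k]))"
proof -
  define sw where "sw = swap_ops 0 i"
  define s where "s = length sw"
  have po: "path_ops kstar l i k = SetZero kstar # (sw @ SetZero k # sw @ [SetZero (l!0)])"
    unfolding path_ops_def sw_def by simp
  have lp: "length (path_ops kstar l i k) = 2 * s + 3" unfolding po s_def by simp
  have g: "gamma_path kstar l i k ! j = fold apply_op (take j (path_ops kstar l i k)) l"
    unfolding gamma_path_def using assms lp unfolding s_def sw_def by (intro run_ops_nth) simp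
  show ?thesis
  proof (cases j)
    case 0
    then show ?thesis using g by simp
  next
    case (Suc j')
    show ?thesis
    proof (cases "j' \<le> s")
      case True
      have "take j (path_ops kstar l i k) = SetZero kstar # take j' sw"
        unfolding po Suc using True take_ops1[of j' sw] unfolding s_def by simp
      then have "gamma_path kstar l i k ! j = fold apply_op (take j' sw) (l[0:=kstar])"
        using g by simp
      then show ?thesis using True Suc unfolding s_def sw_def by simp
    next
      case False
      then obtain t where t: "j' = s + Suc t" by (metis add_Suc_right less_imp_Suc_add not_le)
      have ts: "t \<le> s" using assms Suc t unfolding s_def sw_def by simp
      have "take j (path_ops kstar l i k) = SetZero kstar # (sw @ SetZero k # take t sw)"
        unfolding po Suc t s_def using take_ops2[of t sw "SetZero k" "[SetZero (l!0)]"] ts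
        unfolding s_def by simp
      then have "gamma_path kstar l i k ! j =
          fold apply_op (take t sw) ((fold apply_op sw (l[0:=kstar]))[0:=k])"
        using g by simp
      moreover have "\<not> j \<le> s + 1" "j - s - 2 = t" using Suc t by auto
      ultimately show ?thesis unfolding s_def sw_def by simp
    qed
  qed
qed


lemma key:
  assumes iL: "i \<le> L" and jb: "j < 2 * length (swap_ops 0 i) + 3" and ks: "kstar \<in> {1..m}"
  shows "finite {(l,k). l \<in> states L m \<and> k \<in> {1..m} \<and> gamma_path kstar l i k ! j = \<tau>}
     \<and> card {(l,k). l \<in> states L m \<and> k \<in> {1..m} \<and> gamma_path kstar l i k ! j = \<tau>} \<le> m^2"
proof -
  define R where "R = {(l,k). l \<in> states L m \<and> k \<in> {1..m} \<and> gamma_path kstar l i k ! j = \<tau>}"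
  define sw where "sw = swap_ops 0 i"
  define s where "s = length sw"
  define X where "X = (\<lambda>l::nat list. fold apply_op sw (l[0:=kstar]))"
  define f where "f = (\<lambda>(l::nat list,k::nat). (l!0, if j \<le> s+1 then k else X l ! 0))"
  have okn: "exch_ok (Suc L) sw" unfolding sw_def using iL by (intro swap_ok) auto
  have okt: "exch_ok (Suc L) (take t sw)" for t using ok_take[OF okn] .
  have gn: "gamma_path kstar l i k ! j =
    (if j = 0 then l else if j \<le> s + 1
     then fold apply_op (take (j-1) sw) (l[0:=kstar])
     else fold apply_op (take (j - s - 2) sw) ((X l)[0:=k]))" for l k
    using gamma_nth[of j i kstar l k] jb unfolding s_def sw_def X_def by simp
  have lenX: "length (X l) = Suc L" if "length l = Suc L" for l
    unfolding X_def using that by simp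
  have rec: "l = l'" if "l[0:=kstar] = l'[0:=kstar]" "l!0 = l'!0" for l l' :: "nat list"
  proof -
    have "l = (l[0:=kstar])[0:=l!0]" by simp
    also have "\<dots> = (l'[0:=kstar])[0:=l'!0]" using that by simp
    also have "\<dots> = l'" by simp
    finally show ?thesis .
  qed
  have inj: "inj_on f R"
  proof (rule inj_onI)
    fix p q assume pR: "p \<in> R" and qR: "q \<in> R" and fe: "f p = f q"
    obtain l k where p: "p = (l,k)" by (cases p)
    obtain l' k' where q: "q = (l',k')" by (cases q)
    have l: "length l = Suc L" "gamma_path kstar l i k ! j = \<tau>"
      using pR unfolding p R_def states_def by auto
    have l': "length l' = Suc L" "gamma_path kstar l' i k' ! j = \<tau>"
      using qR unfolding q R_def states_def by auto
    have e0: "l!0 = l'!0" using fe unfolding p q f_def by simp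
    show "p = q"
    proof (cases "j \<le> s + 1")
      case True
      have kk: "k = k'" using fe True unfolding p q f_def by simp
      show ?thesis
      proof (cases "j = 0")
        case True
        then have "l = l'" using l(2) l'(2) gn by simp
        then show ?thesis using kk p q by simp
      next
        case False
        have "fold apply_op (take (j-1) sw) (l[0:=kstar]) = fold apply_op (take (j-1) sw) (l'[0:=kstar])"
          using l(2) l'(2) gn[of l k] gn[of l' k'] False True by simp
        then have "l[0:=kstar] = l'[0:=kstar]"
          using exec_inj[of "l[0:=kstar]" "take (j-1) sw" "l'[0:=kstar]"] okt l(1) l'(1) by simp
        then have "l = l'" using rec e0 by blast
        then show ?thesis using kk p q by simp
      qed
    next
      case False
      have x0: "X l ! 0 = X l' ! 0" using fe False unfolding p q f_def by simp
      have "fold apply_op (take (j - s - 2) sw) ((X l)[0:=k]) = fold apply_op (take (j - s - 2) sw) ((X l')[0:=k'])"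
        using l(2) l'(2) gn[of l k] gn[of l' k'] False by simp
      then have B: "(X l)[0:=k] = (X l')[0:=k']"
        using exec_inj[of "(X l)[0:=k]" "take (j - s - 2) sw" "(X l')[0:=k']"] okt lenX l(1) l'(1) by simp
      have kk: "k = k'"
      proof -
        have "k = (X l)[0:=k] ! 0" using lenX[OF l(1)] by simp
        also have "\<dots> = (X l')[0:=k'] ! 0" using B by simp
        also have "\<dots> = k'" using lenX[OF l'(1)] by simp
        finally show ?thesis .
      qed
      have "X l = ((X l)[0:=k])[0:= X l ! 0]" by simp
      also have "\<dots> = ((X l')[0:=k'])[0:= X l' ! 0]" using B x0 by simp
      also have "\<dots> = X l'" by simp
      finally have "X l = X l'" .
      then have "l[0:=kstar] = l'[0:=kstar]"
        using exec_inj[of "l[0:=kstar]" sw "l'[0:=kstar]"] okn l(1) l'(1) unfolding X_def by simp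
      then have "l = l'" using rec e0 by blast
      then show ?thesis using kk p q by simp
    qed
  qed
  have img: "f ` R \<subseteq> {1..m} \<times> {1..m}"
  proof
    fix z assume "z \<in> f ` R"
    then obtain l k where lk: "(l,k) \<in> R" and z: "z = f (l,k)" by auto
    have l: "length l = Suc L" "set l \<subseteq> {1..m}" "k \<in> {1..m}"
      using lk unfolding R_def states_def by auto
    have "l!0 \<in> set l" using l(1) by simp
    then have a: "l!0 \<in> {1..m}" using l(2) by blast
    have sl: "set (l[0:=kstar]) \<subseteq> {1..m}"
      using set_update_subset_insert[of l 0 kstar] l(2) ks by blast
    have "set (X l) \<subseteq> {1..m}" unfolding X_def
      by (rule exec_set) (use okn l(1) sl in simp_all)
    moreover have "X l ! 0 \<in> set (X l)" using lenX[OF l(1)] by simp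
    ultimately have b: "X l ! 0 \<in> {1..m}" by blast
    show "z \<in> {1..m} \<times> {1..m}" unfolding z f_def using a b l(3) by simp
  qed
  have fin: "finite R"
    using finite_imageD[OF finite_subset[OF img] inj] by simp
  have "card R \<le> card ({1..m} \<times> {1..m})"
    using card_inj_on_le[OF inj img] by simp
  also have "\<dots> = m^2" by (simp add: power2_eq_square)
  finally show ?thesis using fin unfolding R_def by simp
qed


lemma pow3: "real (3^K) \<le> real (L+1) powr log 2 3" if "2^K \<le> L+1" for K L :: nat
proof -
  have "real (2^K) powr log 2 3 = (2 powr real K) powr log 2 3"
    by (simp add: powr_realpow)
  also have "\<dots> = 2 powr (log 2 3 * real K)" by (simp add: powr_powr mult.commute)
  also have "\<dots> = (2 powr log 2 3) powr real K" by (simp only: powr_powr)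
  also have "\<dots> = 3 powr real K" by simp
  also have "\<dots> = real (3^K)" by (simp add: powr_realpow)
  finally have e: "real (3^K) = real (2^K) powr log 2 3" by simp
  have "real (2^K) powr log 2 3 \<le> real (L+1) powr log 2 3"
    by (rule powr_mono2) (use that in \<open>auto simp del: of_nat_power\<close>)
  then show ?thesis using e by simp
qed

theorem lemma6:
  shows "\<exists>C::real. C > 0 \<and>
    (\<forall>L m kstar \<tau> \<tau>'. L \<ge> 1 \<longrightarrow> m \<ge> 1 \<longrightarrow> kstar \<in> {1..m} \<longrightarrow>
      \<tau> \<in> states L m \<longrightarrow> \<tau>' \<in> states L m \<longrightarrow>
      real (card {(lam, i, k). lam \<in> states L m \<and> i \<in> {0..L} \<and> k \<in> {1..m} \<and>
                   (\<tau>, \<tau>') \<in> consec_pairs (gamma_path kstar lam i k)})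
        \<le> C * real m ^ 2 * real (L + 1) powr (1 + log 2 3))"
proof (rule exI[of _ 9], intro conjI allI impI)
  show "(0::real) < 9" by simp
  fix L m kstar :: nat and \<tau> \<tau>' :: "nat list"
  assume L1: "L \<ge> 1" and m1: "m \<ge> 1" and ks: "kstar \<in> {1..m}"
    and "\<tau> \<in> states L m" "\<tau>' \<in> states L m"
  define T where "T = {(lam, i, k). lam \<in> states L m \<and> i \<in> {0..L} \<and> k \<in> {1..m} \<and>
                   (\<tau>, \<tau>') \<in> consec_pairs (gamma_path kstar lam i k)}"
  define R where "R i j = {(l,k). l \<in> states L m \<and> k \<in> {1..m} \<and> gamma_path kstar l i k ! j = \<tau>}" for i j
  define sl where "sl i = length (swap_ops 0 i)" for i
  define g where "g i = (\<lambda>(l::nat list,k::nat). (l,i,k))" for i :: nat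
  have sub: "T \<subseteq> (\<Union>i\<in>{0..L}. \<Union>j\<in>{..<2*sl i+3}. g i ` R i j)"
  proof
    fix z assume "z \<in> T"
    then obtain l i k where z: "z = (l,i,k)" and l: "l \<in> states L m" "i \<in> {0..L}" "k \<in> {1..m}"
      and c: "(\<tau>,\<tau>') \<in> consec_pairs (gamma_path kstar l i k)" unfolding T_def by auto
    from c obtain n where n: "gamma_path kstar l i k ! n = \<tau>" "n < length (tl (gamma_path kstar l i k))"
      unfolding consec_pairs_def in_set_zip by auto
    have "length (gamma_path kstar l i k) = 2 * sl i + 4"
      unfolding gamma_path_def path_ops_def sl_def by simp
    then have nb: "n < 2*sl i + 3" using n(2) by simp
    have "(l,k) \<in> R i n" unfolding R_def using l n(1) by simp
    then have "z \<in> g i ` R i n" unfolding z g_def by force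
    then show "z \<in> (\<Union>i\<in>{0..L}. \<Union>j\<in>{..<2*sl i+3}. g i ` R i j)" using l(2) nb by blast
  qed
  have finR: "finite (R i j)" and cR: "card (R i j) \<le> m^2" if "i \<le> L" "j < 2*sl i+3" for i j
    using key[OF that(1) _ ks, of j \<tau>] that unfolding R_def sl_def by auto
  obtain K where K: "2^K \<le> L+1" "L+1 < 2^(K+1)" using ex_power_ivl1[of 2 "L+1"] by auto
  have slb: "sl i \<le> 3 * 3^K" if "i \<le> L" for i
    using swap_len[of i 0 "K+1"] K(2) that unfolding sl_def by simp
  have "card T \<le> card (\<Union>i\<in>{0..L}. \<Union>j\<in>{..<2*sl i+3}. g i ` R i j)"
    by (rule card_mono) (auto intro!: finite_imageI finR sub)
  also have "\<dots> \<le> (\<Sum>i\<in>{0..L}. card (\<Union>j\<in>{..<2*sl i+3}. g i ` R i j))"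
    by (rule card_UN_le) simp
  also have "\<dots> \<le> (\<Sum>i\<in>{0..L}. \<Sum>j\<in>{..<2*sl i+3}. card (g i ` R i j))"
    by (intro sum_mono card_UN_le) simp
  also have "\<dots> \<le> (\<Sum>i\<in>{0..L}. \<Sum>j\<in>{..<2*sl i+3}. m^2)"
  proof (intro sum_mono)
    fix i j assume "i \<in> {0..L}" "j \<in> {..<2*sl i+3}"
    then show "card (g i ` R i j) \<le> m^2"
      using card_image_le[OF finR, of i j "g i"] cR[of i j] by simp
  qed
  also have "\<dots> = (\<Sum>i\<in>{0..L}. (2*sl i+3)*m^2)" by simp
  also have "\<dots> \<le> (\<Sum>i\<in>{0..L}. 9*3^K*m^2)"
  proof (intro sum_mono)
    fix i assume "i \<in> {0..L}"
    then have "sl i \<le> 3 * 3^K" using slb by simp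
    moreover have "(1::nat) \<le> 3^K" by simp
    ultimately have "2*sl i + 3 \<le> 9*3^K" by linarith
    then show "(2*sl i+3)*m^2 \<le> 9*3^K*m^2" by (rule mult_right_mono) simp
  qed
  also have "\<dots> = (L+1)*(9*3^K*m^2)" by simp
  finally have cT: "card T \<le> (L+1)*(9*3^K*m^2)" .
  have "real (card T) \<le> real ((L+1)*(9*3^K*m^2))"
    using cT by (simp only: of_nat_le_iff)
  also have "\<dots> = real (L+1) * (9 * real (3^K) * real m ^ 2)"
    by (simp add: algebra_simps)
  also have "\<dots> \<le> real (L+1) * (9 * (real (L+1) powr log 2 3) * real m ^ 2)"
    using pow3[OF K(1)] by (intro mult_left_mono mult_right_mono) auto
  also have "\<dots> = 9 * real m ^ 2 * (real (L+1) powr 1 * real (L+1) powr log 2 3)"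
    by simp
  also have "\<dots> = 9 * real m ^ 2 * real (L + 1) powr (1 + log 2 3)"
    by (simp add: powr_add)
  finally show "real (card T) \<le> 9 * real m ^ 2 * real (L + 1) powr (1 + log 2 3)" .
qed

end
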